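(* For all real $x\ge4$, $H(x)<\dfrac{2\log(x)}{1+\frac{6}{\pi^2x}}$.
   Context: $H(x)=\int_0^1\frac{t^x-1}{t-1}\,dt$ for real $x\ge1$; it satisfies $H(n)=1+\frac12+\cdots+\frac1n$ for $n\in\mathbb{N}$ and $H(x)=\psi(x+1)+\gamma$ with $\psi=\Gamma'/\Gamma$ the digamma function. *)

theory Defs
  imports "HOL-Analysis.Analysis"
begin

definition H :: "real \<Rightarrow> real" where
  "H x = integral {0..1} (\<lambda>t. (t powr x - 1) / (t - 1))"

end

theory Submission
  imports Defs "HOL-Analysis.Harmonic_Numbers"
begin

lemma pow_int: "((\<lambda>t::real. t ^ k) has_integral inverse (of_nat (Suc k))) {0..1}"
proof -
  have d: "((\<lambda>t. t^Suc k / real (Suc k)) has_vector_derivative t^k) (at t within {0..1})" for t :: real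
  proof -
    have "((\<lambda>t. t^Suc k / real (Suc k)) has_real_derivative (real (Suc k) * t ^ (Suc k - Suc 0) / real (Suc k))) (at t)"
      by (intro DERIV_cdivide DERIV_pow)
    hence "((\<lambda>t. t^Suc k / real (Suc k)) has_real_derivative t^k) (at t)" by simp
    thus ?thesis
      unfolding has_real_derivative_iff_has_vector_derivative[symmetric]
      by (rule has_field_derivative_at_within)
  qed
  have "((\<lambda>t::real. t ^ k) has_integral (1 ^ Suc k / real (Suc k) - 0 ^ Suc k / real (Suc k))) {0..1}"
    by (rule fundamental_theorem_of_calculus) (use d in auto)
  thus ?thesis by (simp add: inverse_eq_divide)
qed

lemma poly_int: "((\<lambda>t::real. \<Sum>k<n. t ^ k) has_integral harm n) {0..1}"
  unfolding harm_altdef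
  by (intro has_integral_sum finite_lessThan pow_int)

lemma q_int:
  assumes "n > 0"
  shows "((\<lambda>t::real. (t powr real n - 1) / (t - 1)) has_integral harm n) {0..1}"
proof (rule has_integral_spike[OF _ _ poly_int])
  show "negligible {1::real}" by simp
  fix t :: real assume "t \<in> {0..1} - {1}"
  hence t: "0 \<le> t" "t \<noteq> 1" by auto
  have "t powr real n = t ^ n"
    using t assms by (cases "t = 0") (auto simp: powr_realpow)
  thus "(t powr real n - 1) / (t - 1) = (\<Sum>k<n. t ^ k)"
    using geometric_sum[OF t(2)] by simp
qed

lemma pointwise:
  assumes "t \<in> {0..1::real}" "1 \<le> x" "x \<le> real n"
  shows "(t powr x - 1) / (t - 1) \<le> (t powr real n - 1) / (t - 1)"
proof (cases "t = 1")
  case False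
  with assms have "t < 1" by auto
  have "t powr real n \<le> t powr x" using assms by (intro powr_mono') auto
  hence "t powr real n - 1 \<le> t powr x - 1" by simp
  thus ?thesis using \<open>t < 1\<close> by (intro divide_right_mono_neg) auto
qed simp

lemma H_le_harm:
  assumes "1 \<le> x" "x \<le> real n"
  shows "H x \<le> harm n"
proof (cases "(\<lambda>t. (t powr x - 1) / (t - 1)) integrable_on {0..1}")
  case True
  have n: "n > 0" using assms by auto
  show ?thesis unfolding H_def
    by (rule has_integral_le[OF integrable_integral[OF True] q_int[OF n]])
       (use pointwise assms in auto)
next
  case False
  thus ?thesis unfolding H_def by (simp add: not_integrable_integral harm_nonneg)
qed

lemma harm_le_ln: "n > 0 \<Longrightarrow> harm n \<le> ln (real n) + (1::real)"
  using euler_mascheroni_sequence_decreasing[of 1 n] by (simp add: harm_altdef)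


lemma ln5: "ln (5::real) \<ge> (158/100)"
proof -
  have "ln (5::real) \<in> {(\<Sum>k<3. 2*((5-1)/(5+1))^(2*k+1) / of_nat (2*k+1)) .. (\<Sum>k<3. 2*((5-1)/(5+1))^(2*k+1) / of_nat (2*k+1)) + 2*(((5-1)/(5+1))^(2*3+1) / (1 - ((5-1)/(5+1))^2) / of_nat (2*3+1))}"
    by (rule ln_approx_bounds[of 5 3]) simp
  hence "ln (5::real) \<ge> (\<Sum>k<3. 2*((5-1)/(5+1))^(2*k+1) / of_nat (2*k+1))" by simp
  moreover have "(\<Sum>k<3. 2*((5-1)/(5+1))^(2*k+1) / of_nat (2*k+1)) = (2*(2/3) + 2*(2/3)^3/3 + 2*(2/3)^5/5 :: real)"
    by (simp add: eval_nat_numeral)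
  ultimately show ?thesis by (simp add: eval_nat_numeral)
qed

theorem mainTheorem13:
  fixes x :: real
  assumes "x \<ge> 4"
  shows "H x < 2 * ln x / (1 + 6 / (pi\<^sup>2 * x))"
proof -
  define n where "n = nat \<lceil>x\<rceil>"
  have xn: "x \<le> real n" "real n < x + 1" using assms unfolding n_def by linarith+
  have Hle: "H x \<le> harm n" using H_le_harm xn assms by simp
  have pi2: "pi\<^sup>2 \<ge> (98696/10000)" 
  proof -
    have "pi * pi \<ge> 3.141592653588 * 3.141592653588"
      using pi_approx(1) by (intro mult_mono) auto
    thus ?thesis by (simp add: power2_eq_square)
  qed
  define c where "c = 6 / pi\<^sup>2"
  have c: "0 < c" "c \<le> (6081/10000)" unfolding c_def using pi2 by (auto simp: field_simps)
  have eq: "6 / (pi\<^sup>2 * x) = c / x" unfolding c_def by simp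
  have xpos: "x > 0" using assms by simp
  show ?thesis
  proof (cases "x \<le> 5")
    case True
    have "n \<le> 5" using xn True by linarith
    hence "harm n \<le> (harm 5 :: real)" by (rule harm_mono)
    also have "harm 5 = (137/60 :: real)" by (simp add: harm_altdef eval_nat_numeral)
    finally have h: "harm n \<le> (137/60::real)" .
    have "ln x \<ge> ln 4" using assms by simp
    moreover have "ln (4::real) = 2 * ln 2" using ln_realpow[of 2 2] by simp
    ultimately have L: "ln x \<ge> 4/3" using ln2_ge_two_thirds by linarith
    have cx: "c / x \<le> (6081/10000) / 4" using c assms by (intro frac_le) auto
    have "137/60 < 2 * ln x / (1 + c / x)"
      using L cx c xpos by (subst pos_less_divide_eq) (auto simp: algebra_simps intro: add_pos_nonneg)
    thus ?thesis using Hle h eq by simp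
  next
    case False
    have L5: "ln (5::real) \<ge> (158/100)" by (rule ln5)
    have "ln 5 \<le> ln x" using False by (intro ln_mono) auto
    hence L: "ln x \<ge> (158/100)" using L5 by linarith
    have np: "n > 0" using xn assms by auto
    have h1: "harm n \<le> ln (real n) + 1" using harm_le_ln[OF np] .
    have h2: "ln (real n) \<le> ln (x + 1)" proof -
      have p: "0 < real n" using np by simp
      have q: "real n \<le> x + 1" using xn(2) by linarith
      have r: "0 < x + 1" using xpos by linarith
      show ?thesis using ln_le_cancel_iff[OF p r] q by blast
    qed
    have h3: "ln (x + 1) = ln x + ln (1 + 1/x)"
    proof -
      have e: "x * (1 + 1/x) = x + 1" using xpos by (simp add: distrib_left)
      have p: "0 < 1 + 1/x" using xpos by (simp add: add_pos_pos)
      have "ln (x * (1 + 1/x)) = ln x + ln (1 + 1/x)" using xpos p by (simp only: ln_mult) simp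
      thus ?thesis by (simp only: e)
    qed
    have h4: "ln (1 + 1/x) \<le> 1/x" by (rule ln_add_one_self_le_self) (use xpos in simp)
    have h: "harm n \<le> ln x + 1/x + 1" using h1 h2 h3 h4 by linarith
    have key: "(ln x + 1/x + 1) * (1 + c/x) < 2 * ln x"
    proof -
      have e1: "(ln x + 1/x + 1) * (1 + c/x) * (x*x) = (ln x * x + 1 + x) * (x + c)"
        using xpos by (simp add: field_simps)
      have xc: "x*x - c*x \<ge> 0" using c False by (simp add: mult_right_mono)
      have a: "ln x * (x*x - c*x) \<ge> (158/100) * (x*x - c*x)"
        using L xc by (intro mult_right_mono) auto
      have cx: "c * x \<le> (6081/10000) * x" using c False by (intro mult_right_mono) auto
      have xx: "x * x \<ge> 5 * x" using False by (intro mult_right_mono) auto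
      have e2: "(1+x)*(x+c) = x*x + c*x + x + c" by (simp add: algebra_simps)
      have e3: "(158/100)*(x*x-c*x) = (158/100)*(x*x) - (158/100)*(c*x)" by (rule right_diff_distrib)
      have b: "(158/100) * (x*x - c*x) > (1 + x) * (x + c)"
        using cx xx e2 e3 c False by linarith
      have e4: "(ln x * x + 1 + x) * (x + c) = 2 * ln x * (x*x) - ln x * (x*x - c*x) + (1+x)*(x+c)"
        by (simp add: algebra_simps)
      have "(ln x + 1/x + 1) * (1 + c/x) * (x*x) < 2 * ln x * (x*x)"
        using e1 e4 a b by linarith
      moreover have "x * x > 0" using xpos by simp
      ultimately show ?thesis using mult_less_cancel_right_pos by blast
    qed
    have "harm n < 2 * ln x / (1 + c / x)"
    proof -
      have d: "1 + c / x > 0" using c xpos by (simp add: add_pos_nonneg)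
      have m: "harm n * (1 + c/x) \<le> (ln x + 1/x + 1) * (1 + c/x)"
        using h d by (intro mult_right_mono) auto
      have "harm n * (1 + c/x) < 2 * ln x" using m key by linarith
      thus ?thesis using d by (simp add: pos_less_divide_eq)
    qed
    thus ?thesis using Hle eq by simp
  qed
qed

end
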